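(* Consider the iterates of the Byzantine-resilient algorithm in the context, and let $\Lambda^{k}\in\mathbb R^{H\times D}$ and $\Lambda^{k+1/2}\in\mathbb R^{H\times D}$ be the matrices whose $i$-th rows are $(\lambda_i^k)^\top$ and $(\lambda_i^{k+1/2})^\top$, $i\in\mathcal H$. Then for every $k\ge0$ and every $v\in(0,1)$, $$\Big\|\Lambda^{k+\frac12}-\tfrac1H\mathbf 1\mathbf 1^\top\Lambda^{k+\frac12}\Big\|_F^2\le\Big(\frac{1}{1-v}+\frac{6(\gamma^k)^2}{v\,u_f^2J^2}\Big)\Big\|\Lambda^{k}-\tfrac1H\mathbf 1\mathbf 1^\top\Lambda^{k}\Big\|_F^2+\frac{3(\gamma^k)^2\delta^2H^3}{vJ^2}.$$ In particular, if $\gamma^k\le\frac{u_fJ}{2\sqrt3}$, then $$\Big\|\Lambda^{k+\frac12}-\tfrac1H\mathbf 1\mathbf 1^\top\Lambda^{k+\frac12}\Big\|_F^2\le3\Big\|\Lambda^{k}-\tfrac1H\mathbf 1\mathbf 1^\top\Lambda^{k}\Big\|_F^2+\frac{6(\gamma^k)^2\delta^2H^3}{J^2}.$$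
   Context: Byzantine setting: $J$ agents, of which $\mathcal H=\{1,\dots,H\}$ are honest. For each $i\in\mathcal H$, $f_i:\mathbb R^D\to\mathbb R$ is $u_f$-strongly convex and $L_f$-smooth, $C_i\subset\mathbb R^D$ nonempty compact convex, $s\in\mathbb R^D$. Define $g_i(\lambda)=\frac1H\max_{\theta\in C_i}\{-\lambda^\top\theta-f_i(\theta)\}+\frac1H\lambda^\top s$, so $\nabla g_i(\lambda)=\frac1H s-\frac1H\arg\min_{\theta\in C_i}\{\lambda^\top\theta+f_i(\theta)\}$, and $\delta^2:=\sup_{\lambda\in\mathbb R^D}\max_{i\in\mathcal H}\|\nabla g_i(\lambda)-\frac1H\sum_{j\in\mathcal H}\nabla g_j(\lambda)\|^2<\infty$. The honest agents run: $\theta_i^k=\arg\min_{\theta\in C_i}\{\theta^\top\lambda_i^k+f_i(\theta)\}$, $\lambda_i^{k+1/2}=\lambda_i^k-\gamma^k(\frac1J s-\frac1J\theta_i^k)$ (and then $\lambda_i^{k+1}$ is produced by some aggregation rule), with step sizes $\gamma^k>0$. $\mathbf 1\in\mathbb R^H$ is the all-ones vector and $\|\cdot\|_F$ the Frobenius norm. *)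

theory Defs
  imports "HOL-Analysis.Analysis"
begin

definition strongly_convex :: "real \<Rightarrow> ('a::real_inner \<Rightarrow> real) \<Rightarrow> bool" where
  "strongly_convex u f \<longleftrightarrow>
     (\<forall>x y t. 0 \<le> t \<and> t \<le> 1 \<longrightarrow>
        f (t *\<^sub>R x + (1 - t) *\<^sub>R y)
          \<le> t * f x + (1 - t) * f y - u / 2 * t * (1 - t) * (norm (x - y))\<^sup>2)"

definition smooth_with :: "real \<Rightarrow> ('a::real_inner \<Rightarrow> real) \<Rightarrow> bool" where
  "smooth_with L f \<longleftrightarrow>
     (\<exists>g. (\<forall>x. (f has_derivative (\<lambda>h. g x \<bullet> h)) (at x)) \<and>
          (\<forall>x y. norm (g x - g y) \<le> L * norm (x - y)))"

text \<open>The (unique, under the standing assumptions) minimiser of F over C.\<close>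
definition argminC :: "'a set \<Rightarrow> ('a \<Rightarrow> real) \<Rightarrow> 'a" where
  "argminC C F = (THE x. x \<in> C \<and> (\<forall>y\<in>C. F x \<le> F y))"

definition grad_g :: "nat \<Rightarrow> 'a::real_inner \<Rightarrow> (nat \<Rightarrow> 'a set) \<Rightarrow> (nat \<Rightarrow> 'a \<Rightarrow> real)
    \<Rightarrow> nat \<Rightarrow> 'a \<Rightarrow> 'a" where
  "grad_g H s C f i lam =
     (1 / real H) *\<^sub>R s - (1 / real H) *\<^sub>R argminC (C i) (\<lambda>\<theta>. lam \<bullet> \<theta> + f i \<theta>)"

text \<open>The set whose supremum is \<delta>^2 (honest agents are 1..H).\<close>
definition het_set :: "nat \<Rightarrow> 'a::real_inner \<Rightarrow> (nat \<Rightarrow> 'a set) \<Rightarrow> (nat \<Rightarrow> 'a \<Rightarrow> real) \<Rightarrow> real set" where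
  "het_set H s C f =
     {(norm (grad_g H s C f i lam - (1 / real H) *\<^sub>R (\<Sum>j=1..H. grad_g H s C f j lam)))\<^sup>2
        | i lam. i \<in> {1..H}}"

text \<open>Squared Frobenius norm of \<Lambda> - (1/H) 1 1^T \<Lambda>, where row i of \<Lambda> is x i, i=1..H.\<close>
definition cons_dev :: "nat \<Rightarrow> (nat \<Rightarrow> 'a::real_normed_vector) \<Rightarrow> real" where
  "cons_dev H x = (\<Sum>i=1..H. (norm (x i - (1 / real H) *\<^sub>R (\<Sum>j=1..H. x j)))\<^sup>2)"

end

theory Submission
  imports Defs
begin

lemma young_scalar:
  fixes p q v :: real assumes "0<v" "v<1"
  shows "2*p*q \<le> (v/(1-v)) * p^2 + ((1-v)/v) * q^2"
proof -
  have e: "((v/(1-v)) * p^2 + ((1-v)/v) * q^2)*(v *(1-v)) = (v *p)^2 + ((1-v)*q)^2"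
    using assms by (simp add: field_simps power2_eq_square)
  have f: "(v *p - (1-v)*q)^2 = (v *p)^2 + ((1-v)*q)^2 - 2*p*q*(v *(1-v))"
    by (simp add: power2_eq_square algebra_simps)
  have "0 \<le> (v *p - (1-v)*q)^2" by simp
  hence "2*p*q*(v *(1-v)) \<le> ((v/(1-v)) * p^2 + ((1-v)/v) * q^2)*(v *(1-v))"
    using e f by linarith
  moreover have "v *(1-v) > 0" using assms by simp
  ultimately show ?thesis by (simp add: mult_le_cancel_right)
qed

lemma norm_add_sq:
  fixes a b :: "'a::real_inner"
  shows "(norm (a+b))^2 = (norm a)^2 + 2*(a \<bullet> b) + (norm b)^2"
  by (simp add: power2_norm_eq_inner inner_add inner_commute)

lemma young:
  fixes a b :: "'a::real_inner" assumes "0<v" "v<1"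
  shows "(norm (a+b))^2 \<le> 1/(1-v)*(norm a)^2 + 1/v *(norm b)^2"
proof -
  have "a \<bullet> b \<le> norm a * norm b" by (rule norm_cauchy_schwarz)
  moreover have "2*norm a*norm b \<le> v/(1-v)*(norm a)^2 + (1-v)/v *(norm b)^2"
    by (rule young_scalar[OF assms])
  moreover have "1/(1-v) = 1 + v/(1-v)" "1/v = 1 + (1-v)/v" using assms by (simp_all add: field_simps)
  ultimately show ?thesis unfolding norm_add_sq by (simp add: algebra_simps)
qed

lemma sq2:
  fixes a b :: "'a::real_inner"
  shows "(norm (a+b))^2 \<le> 2*(norm a)^2 + 2*(norm b)^2"
  using young[of "1/2" a b] by simp

lemma var_le:
  fixes z :: "nat \<Rightarrow> 'a::real_inner"
  assumes "1 \<le> H"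
  shows "cons_dev H z \<le> (\<Sum>i=1..H. (norm (z i - m))^2)"
proof -
  define zb where "zb = (1 / real H) *\<^sub>R (\<Sum>j=1..H. z j)"
  have S: "(\<Sum>i=1..H. (z i - zb)) = 0"
    using assms by (simp add: sum_subtractf zb_def sum_constant_scaleR)
  have "(\<Sum>i=1..H. (norm (z i - m))^2) = (\<Sum>i=1..H. (norm (z i - zb))^2 + 2*((z i - zb) \<bullet> (zb - m)) + (norm (zb - m))^2)"
  proof (rule sum.cong)
    fix i show "(norm (z i - m))^2 = (norm (z i - zb))^2 + 2*((z i - zb) \<bullet> (zb - m)) + (norm (zb - m))^2"
      using norm_add_sq[of "z i - zb" "zb - m"] by simp
  qed simp
  also have "\<dots> = (\<Sum>i=1..H. (norm (z i - zb))^2) + 2*((\<Sum>i=1..H. (z i - zb)) \<bullet> (zb - m)) + H * (norm (zb - m))^2"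
    by (simp add: sum.distrib inner_sum_left sum_distrib_left)
  also have "\<dots> \<ge> (\<Sum>i=1..H. (norm (z i - zb))^2)" using S by simp
  finally show ?thesis unfolding cons_dev_def zb_def by simp
qed

lemma sc_lin:
  assumes "strongly_convex u f"
  shows "strongly_convex u (\<lambda>x. l \<bullet> x + f x)"
  using assms unfolding strongly_convex_def
  by (auto simp: inner_add_right algebra_simps)

lemma growth:
  fixes F :: "'a::real_inner \<Rightarrow> real"
  assumes sc: "strongly_convex u F" and u: "u > 0" and cv: "convex C"
    and aC: "a \<in> C" and amin: "\<forall>y\<in>C. F a \<le> F y" and yC: "y \<in> C"
  shows "F a + u/2 * (norm (y - a))^2 \<le> F y"
proof (rule ccontr)
  define d where "d = (norm (y - a))^2"
  assume "\<not> ?thesis"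
  hence ne: "F a + u/2 * d > F y" by (simp add: d_def)
  define e where "e = F a + u/2 * d - F y"
  have e0: "e > 0" using ne by (simp add: e_def)
  have key: "F a \<le> F y - u/2 * (1-t) * d" if t: "0 < t" "t \<le> 1" for t
  proof -
    have zC: "t *\<^sub>R y + (1-t) *\<^sub>R a \<in> C"
    proof -
      have "(1-t) *\<^sub>R a + t *\<^sub>R y \<in> C" using cv[unfolded convex_alt] aC yC t by simp
      thus ?thesis by (simp add: add.commute)
    qed
    have "F a \<le> F (t *\<^sub>R y + (1-t) *\<^sub>R a)" using amin zC by blast
    also have "\<dots> \<le> t * F y + (1-t) * F a - u/2 * t * (1-t) * d"
      using sc[unfolded strongly_convex_def, rule_format, of t y a] t unfolding d_def by simp
    finally have "t * F a \<le> t * (F y - u/2 * (1-t) * d)" by (simp add: algebra_simps)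
    thus ?thesis using t by simp
  qed
  have d0: "d > 0"
  proof (rule ccontr)
    assume "\<not> d > 0" hence "d = 0" by (simp add: d_def)
    thus False using key[of 1] ne by simp
  qed
  define t where "t = min 1 (e / (u * d))"
  have t0: "0 < t" "t \<le> 1" using e0 d0 u by (auto simp: t_def)
  have ud: "u * d > 0" using d0 u by simp
  have "t \<le> e / (u * d)" by (simp add: t_def)
  hence "t * (u * d) \<le> e" using ud by (simp add: pos_le_divide_eq)
  moreover have "F a \<le> F y - u/2 * (1-t) * d" using key t0 by blast
  moreover have "u/2 * (1-t) * d = (u*d)/2 - (t*(u*d))/2" by (simp add: field_simps)
  ultimately show False using e0 unfolding e_def by linarith
qed

lemma argmin_props:
  fixes F :: "'a::euclidean_space \<Rightarrow> real"
  assumes sc: "strongly_convex u F" and u: "u > 0" and ct: "continuous_on C F"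
    and cp: "compact C" and cv: "convex C" and ne: "C \<noteq> {}"
  shows "argminC C F \<in> C \<and> (\<forall>y\<in>C. F (argminC C F) + u/2 * (norm (y - argminC C F))^2 \<le> F y)"
proof -
  obtain a where aC: "a \<in> C" and amin: "\<forall>y\<in>C. F a \<le> F y"
    using continuous_attains_inf[OF cp ne ct] by blast
  have "argminC C F = a" unfolding argminC_def
  proof (rule the_equality)
    show "a \<in> C \<and> (\<forall>y\<in>C. F a \<le> F y)" using aC amin by blast
  next
    fix b assume b: "b \<in> C \<and> (\<forall>y\<in>C. F b \<le> F y)"
    have "F a + u/2 * (norm (b - a))^2 \<le> F b" using growth[OF sc u cv aC amin] b by blast
    moreover have "F b \<le> F a" using b aC by blast
    ultimately have "u/2 * (norm (b - a))^2 \<le> 0" by linarith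
    hence "(norm (b - a))^2 \<le> 0" using u by (simp add: mult_le_0_iff)
    thus "b = a" by simp
  qed
  thus ?thesis using growth[OF sc u cv aC amin] aC by simp
qed

lemma lip:
  fixes f :: "'a::real_inner \<Rightarrow> real"
  assumes u: "u > 0"
    and ga: "f a + l \<bullet> a + u/2 * (norm (b - a))^2 \<le> f b + l \<bullet> b"
    and gb: "f b + l' \<bullet> b + u/2 * (norm (a - b))^2 \<le> f a + l' \<bullet> a"
  shows "(norm (a - b))^2 \<le> (norm (l - l'))^2 / u^2"
proof -
  have nab: "norm (b - a) = norm (a - b)" by (rule norm_minus_commute)
  have "u * (norm (a - b))^2 \<le> (l - l') \<bullet> (b - a)"
    using ga gb nab by (simp add: inner_diff algebra_simps)
  also have "\<dots> \<le> norm (l - l') * norm (a - b)"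
    using norm_cauchy_schwarz[of "l - l'" "b - a"] nab by simp
  finally have h: "u * (norm (a - b))^2 \<le> norm (l - l') * norm (a - b)" .
  have "u * norm (a - b) \<le> norm (l - l')"
  proof (cases "norm (a - b) = 0")
    case True thus ?thesis by simp
  next
    case False
    hence p: "norm (a - b) > 0" by simp
    have "(u * norm (a - b)) * norm (a - b) \<le> norm (l - l') * norm (a - b)"
      using h by (simp add: power2_eq_square mult.assoc)
    thus ?thesis using p by simp
  qed
  hence "(u * norm (a - b))^2 \<le> (norm (l - l'))^2"
    using u by (intro power_mono) auto
  thus ?thesis using u by (simp add: field_simps power_mult_distrib)
qed

lemma cont_f:
  assumes "smooth_with L f"
  shows "continuous_on S (\<lambda>\<theta>. l \<bullet> \<theta> + f \<theta>)"
proof -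
  obtain g where g: "\<forall>x. (f has_derivative (\<lambda>h. g x \<bullet> h)) (at x)"
    using assms unfolding smooth_with_def by blast
  have "\<forall>x\<in>S. isCont f x" using g has_derivative_continuous by blast
  hence "continuous_on S f" by (rule continuous_at_imp_continuous_on)
  thus ?thesis by (intro continuous_intros)
qed

theorem lemma3:
  fixes J H :: nat
    and f :: "nat \<Rightarrow> 'a::euclidean_space \<Rightarrow> real" and C :: "nat \<Rightarrow> 'a set" and s :: 'a
    and u_f L_f :: real and \<delta>2 :: real
    and \<gamma> :: "nat \<Rightarrow> real"
    and lam lamh \<theta> :: "nat \<Rightarrow> nat \<Rightarrow> 'a"
  assumes HJ: "1 \<le> H" "H \<le> J"
    and uf: "u_f > 0"
    and sc: "\<And>i. i \<in> {1..H} \<Longrightarrow> strongly_convex u_f (f i)"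
    and sm: "\<And>i. i \<in> {1..H} \<Longrightarrow> smooth_with L_f (f i)"
    and Cne: "\<And>i. i \<in> {1..H} \<Longrightarrow> C i \<noteq> {}"
    and Ccpt: "\<And>i. i \<in> {1..H} \<Longrightarrow> compact (C i)"
    and Ccvx: "\<And>i. i \<in> {1..H} \<Longrightarrow> convex (C i)"
    and bdd: "bdd_above (het_set H s C f)"
    and \<delta>2_def: "\<delta>2 = Sup (het_set H s C f)"
    and \<gamma>pos: "\<And>k. \<gamma> k > 0"
    and \<theta>_def: "\<And>i k. i \<in> {1..H} \<Longrightarrow> \<theta> i k = argminC (C i) (\<lambda>\<theta>'. \<theta>' \<bullet> lam i k + f i \<theta>')"
    and half: "\<And>i k. i \<in> {1..H} \<Longrightarrow>
        lamh i k = lam i k - \<gamma> k *\<^sub>R ((1 / real J) *\<^sub>R s - (1 / real J) *\<^sub>R \<theta> i k)"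
  shows "(\<forall>v. 0 < v \<and> v < 1 \<longrightarrow>
            cons_dev H (\<lambda>i. lamh i k)
              \<le> (1 / (1 - v) + 6 * (\<gamma> k)\<^sup>2 / (v * u_f\<^sup>2 * (real J)\<^sup>2)) * cons_dev H (\<lambda>i. lam i k)
                + 3 * (\<gamma> k)\<^sup>2 * \<delta>2 * (real H) ^ 3 / (v * (real J)\<^sup>2))
       \<and> (\<gamma> k \<le> u_f * real J / (2 * sqrt 3) \<longrightarrow>
            cons_dev H (\<lambda>i. lamh i k)
              \<le> 3 * cons_dev H (\<lambda>i. lam i k) + 6 * (\<gamma> k)\<^sup>2 * \<delta>2 * (real H) ^ 3 / (real J)\<^sup>2)"
proof -
  define x where "x = (\<lambda>i. lam i k)"
  define xb where "xb = (1 / real H) *\<^sub>R (\<Sum>j=1..H. x j)"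
  define c where "c = \<gamma> k / real J"
  define P where "P = (\<lambda>i l. argminC (C i) (\<lambda>\<theta>. l \<bullet> \<theta> + f i \<theta>))"
  define D where "D = cons_dev H x"
  define T where "T = cons_dev H (\<lambda>i. \<theta> i k)"
  define m where "m = (1 / real H) *\<^sub>R (\<Sum>j=1..H. P j xb)"
  have Hpos: "real H > 0" using HJ by simp
  have Jpos: "real J > 0" using HJ by simp
  have PI: "P i l \<in> C i \<and> (\<forall>y\<in>C i. (l \<bullet> P i l + f i (P i l)) + u_f/2 * (norm (y - P i l))^2 \<le> l \<bullet> y + f i y)"
    if i: "i \<in> {1..H}" for i l
    unfolding P_def
    using argmin_props[OF sc_lin[OF sc[OF i]] uf cont_f[OF sm[OF i]] Ccpt[OF i] Ccvx[OF i] Cne[OF i]]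
    by simp
  have Lip: "(norm (P i l - P i l'))^2 \<le> (norm (l - l'))^2 / u_f^2" if i: "i \<in> {1..H}" for i l l'
  proof (rule lip[OF uf])
    show "f i (P i l) + l \<bullet> P i l + u_f / 2 * (norm (P i l' - P i l))\<^sup>2 \<le> f i (P i l') + l \<bullet> P i l'"
      using PI[OF i, of l] PI[OF i, of l'] by force
    show "f i (P i l') + l' \<bullet> P i l' + u_f / 2 * (norm (P i l - P i l'))\<^sup>2 \<le> f i (P i l) + l' \<bullet> P i l"
      using PI[OF i, of l] PI[OF i, of l'] by force
  qed
  have thP: "\<theta> i k = P i (x i)" if i: "i \<in> {1..H}" for i
    unfolding \<theta>_def[OF i] P_def x_def by (simp add: inner_commute)
  have hetmem: "(norm (grad_g H s C f i l - (1 / real H) *\<^sub>R (\<Sum>j=1..H. grad_g H s C f j l)))^2 \<in> het_set H s C f"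
    if "i \<in> {1..H}" for i l
    unfolding het_set_def using that by blast
  have d0: "0 \<le> \<delta>2"
  proof -
    have "1 \<in> {1..H}" using HJ by simp
    from hetmem[OF this, of 0] bdd have "(norm (grad_g H s C f 1 0 - (1 / real H) *\<^sub>R (\<Sum>j=1..H. grad_g H s C f j 0)))^2 \<le> \<delta>2"
      unfolding \<delta>2_def by (rule cSup_upper)
    thus ?thesis by (smt (verit) zero_le_power2)
  qed
  have sumg: "(\<Sum>j=1..H. grad_g H s C f j xb) = s - m"
    using Hpos by (simp add: grad_g_def sum_subtractf sum_constant_scaleR m_def P_def scaleR_sum_right[symmetric])
  have het: "(norm (P i xb - m))^2 \<le> (real H)^2 * \<delta>2" if i: "i \<in> {1..H}" for i
  proof -
    have "grad_g H s C f i xb - (1 / real H) *\<^sub>R (\<Sum>j=1..H. grad_g H s C f j xb) = (1 / real H) *\<^sub>R (m - P i xb)"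
      unfolding sumg by (simp add: grad_g_def P_def algebra_simps)
    hence "(norm ((1 / real H) *\<^sub>R (m - P i xb)))^2 \<le> \<delta>2"
      using hetmem[OF i, of xb] bdd unfolding \<delta>2_def by (metis cSup_upper)
    hence "(norm (m - P i xb))^2 / (real H)^2 \<le> \<delta>2"
      by (simp add: power_divide)
    hence "(norm (m - P i xb))^2 \<le> (real H)^2 * \<delta>2" using Hpos by (simp add: field_simps)
    thus ?thesis by (simp add: norm_minus_commute)
  qed
  have T_le: "T \<le> 2 * D / u_f^2 + 2 * (real H)^3 * \<delta>2"
  proof -
    have "T \<le> (\<Sum>i=1..H. (norm (\<theta> i k - m))^2)" unfolding T_def by (rule var_le[OF HJ(1)])
    also have "\<dots> \<le> (\<Sum>i=1..H. 2 * (norm (x i - xb))^2 / u_f^2 + 2 * ((real H)^2 * \<delta>2))"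
    proof (rule sum_mono)
      fix i assume i: "i \<in> {1..H}"
      have "(norm (\<theta> i k - m))^2 = (norm ((P i (x i) - P i xb) + (P i xb - m)))^2"
        using thP[OF i] by simp
      also have "\<dots> \<le> 2 * (norm (P i (x i) - P i xb))^2 + 2 * (norm (P i xb - m))^2" by (rule sq2)
      also have "\<dots> \<le> 2 * ((norm (x i - xb))^2 / u_f^2) + 2 * ((real H)^2 * \<delta>2)"
        using Lip[OF i, of "x i" xb] het[OF i] by linarith
      finally show "(norm (\<theta> i k - m))^2 \<le> 2 * (norm (x i - xb))^2 / u_f^2 + 2 * ((real H)^2 * \<delta>2)" by simp
    qed
    also have "\<dots> = 2 * D / u_f^2 + 2 * (real H)^3 * \<delta>2"
      unfolding D_def cons_dev_def xb_def by (simp add: sum.distrib sum_divide_distrib[symmetric] sum_distrib_left[symmetric] power3_eq_cube power2_eq_square)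
    finally show ?thesis .
  qed
  have D0: "0 \<le> D" unfolding D_def cons_dev_def by (simp add: sum_nonneg)
  have lh: "lamh i k = x i - c *\<^sub>R s + c *\<^sub>R \<theta> i k" if i: "i \<in> {1..H}" for i
    unfolding half[OF i] x_def c_def by (simp add: algebra_simps)
  define tb where "tb = (1 / real H) *\<^sub>R (\<Sum>j=1..H. \<theta> j k)"
  have yb: "(1 / real H) *\<^sub>R (\<Sum>j=1..H. lamh j k) = xb - c *\<^sub>R s + c *\<^sub>R tb"
  proof -
    have "(\<Sum>j=1..H. lamh j k) = (\<Sum>j=1..H. x j - c *\<^sub>R s + c *\<^sub>R \<theta> j k)"
      by (rule sum.cong) (auto simp: lh)
    also have "\<dots> = (\<Sum>j=1..H. x j) - real H *\<^sub>R (c *\<^sub>R s) + c *\<^sub>R (\<Sum>j=1..H. \<theta> j k)"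
      by (simp add: sum.distrib sum_subtractf sum_constant_scaleR scaleR_sum_right)
    finally have S: "(\<Sum>j=1..H. lamh j k) = (\<Sum>j=1..H. x j) - real H *\<^sub>R (c *\<^sub>R s) + c *\<^sub>R (\<Sum>j=1..H. \<theta> j k)" .
    have hh: "(1 / real H) *\<^sub>R (real H *\<^sub>R (c *\<^sub>R s)) = c *\<^sub>R s" using Hpos by simp
    show ?thesis unfolding S xb_def tb_def scaleR_add_right scaleR_diff_right hh by simp
  qed
  have ydiff: "lamh i k - (1 / real H) *\<^sub>R (\<Sum>j=1..H. lamh j k) = (x i - xb) + c *\<^sub>R (\<theta> i k - tb)"
    if i: "i \<in> {1..H}" for i
    unfolding yb lh[OF i] by (simp add: algebra_simps)
  have main: "cons_dev H (\<lambda>i. lamh i k) \<le> 1/(1-v) * D + c^2 / v * T" if v: "0 < v" "v < 1" for v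
  proof -
    have "cons_dev H (\<lambda>i. lamh i k) = (\<Sum>i=1..H. (norm ((x i - xb) + c *\<^sub>R (\<theta> i k - tb)))^2)"
      unfolding cons_dev_def
    proof (rule sum.cong)
      fix i assume i: "i \<in> {1..H}"
      show "(norm (lamh i k - (1 / real H) *\<^sub>R (\<Sum>j=1..H. lamh j k)))^2 = (norm ((x i - xb) + c *\<^sub>R (\<theta> i k - tb)))^2"
        using ydiff[OF i] by simp
    qed simp
    also have "\<dots> \<le> (\<Sum>i=1..H. 1/(1-v) * (norm (x i - xb))^2 + c^2 / v * (norm (\<theta> i k - tb))^2)"
    proof (rule sum_mono)
      fix i
      show "(norm ((x i - xb) + c *\<^sub>R (\<theta> i k - tb)))^2 \<le> 1/(1-v) * (norm (x i - xb))^2 + c^2 / v * (norm (\<theta> i k - tb))^2"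
        using young[OF v, of "x i - xb" "c *\<^sub>R (\<theta> i k - tb)"] by (simp add: power_mult_distrib)
    qed
    also have "\<dots> = 1/(1-v) * D + c^2 / v * T"
      unfolding D_def T_def cons_dev_def xb_def tb_def by (simp add: sum.distrib sum_distrib_left)
    finally show ?thesis .
  qed
  have part1: "cons_dev H (\<lambda>i. lamh i k)
              \<le> (1 / (1 - v) + 6 * (\<gamma> k)\<^sup>2 / (v * u_f\<^sup>2 * (real J)\<^sup>2)) * cons_dev H (\<lambda>i. lam i k)
                + 3 * (\<gamma> k)\<^sup>2 * \<delta>2 * (real H) ^ 3 / (v * (real J)\<^sup>2)" if v: "0 < v" "v < 1" for v
  proof -
    have Tc: "c^2 / v * T \<le> c^2 / v * (2 * D / u_f^2 + 2 * (real H)^3 * \<delta>2)"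
      using T_le v by (intro mult_left_mono) auto
    define XX where "XX = (\<gamma> k)\<^sup>2 * D / (v * u_f\<^sup>2 * (real J)\<^sup>2)"
    define YY where "YY = (\<gamma> k)\<^sup>2 * \<delta>2 * (real H) ^ 3 / (v * (real J)\<^sup>2)"
    have e: "c^2 / v * (2 * D / u_f^2 + 2 * (real H)^3 * \<delta>2) = 2 * XX + 2 * YY"
      using v Jpos uf unfolding c_def XX_def YY_def by (simp add: field_simps power2_eq_square)
    have X: "0 \<le> XX" using D0 v unfolding XX_def by simp
    have Y: "0 \<le> YY" using d0 v unfolding YY_def by simp
    have e2: "(1 / (1 - v) + 6 * (\<gamma> k)\<^sup>2 / (v * u_f\<^sup>2 * (real J)\<^sup>2)) * D
       = 1/(1-v) * D + 6 * XX"
      unfolding XX_def by (simp add: algebra_simps)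
    have e3: "3 * (\<gamma> k)\<^sup>2 * \<delta>2 * (real H) ^ 3 / (v * (real J)\<^sup>2) = 3 * YY"
      unfolding YY_def by simp
    have "cons_dev H (\<lambda>i. lamh i k) \<le> (1 / (1 - v) + 6 * (\<gamma> k)\<^sup>2 / (v * u_f\<^sup>2 * (real J)\<^sup>2)) * D
                + 3 * (\<gamma> k)\<^sup>2 * \<delta>2 * (real H) ^ 3 / (v * (real J)\<^sup>2)"
      unfolding e2 e3 using main[OF v] Tc e X Y by linarith
    thus ?thesis unfolding D_def x_def .
  qed
  have part2: "cons_dev H (\<lambda>i. lamh i k)
              \<le> 3 * cons_dev H (\<lambda>i. lam i k) + 6 * (\<gamma> k)\<^sup>2 * \<delta>2 * (real H) ^ 3 / (real J)\<^sup>2"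
    if g: "\<gamma> k \<le> u_f * real J / (2 * sqrt 3)"
  proof -
    have p: "cons_dev H (\<lambda>i. lamh i k)
              \<le> (1 / (1 - 1/2) + 6 * (\<gamma> k)\<^sup>2 / (1/2 * u_f\<^sup>2 * (real J)\<^sup>2)) * D
                + 3 * (\<gamma> k)\<^sup>2 * \<delta>2 * (real H) ^ 3 / (1/2 * (real J)\<^sup>2)"
      using part1[of "1/2"] unfolding D_def x_def by simp
    have "(\<gamma> k)^2 \<le> (u_f * real J / (2 * sqrt 3))^2"
      using g \<gamma>pos[of k] by (intro power_mono) auto
    also have "\<dots> = (u_f * real J)^2 / 12" by (simp add: power_mult_distrib power_divide)
    finally have g2: "(\<gamma> k)^2 \<le> (u_f * real J)^2 / 12" .
    have "6 * (\<gamma> k)\<^sup>2 / (1/2 * u_f\<^sup>2 * (real J)\<^sup>2) = 12 * (\<gamma> k)\<^sup>2 / (u_f * real J)^2"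
      by (simp add: power_mult_distrib)
    also have "\<dots> \<le> 1" using g2 uf Jpos by (simp add: field_simps)
    finally have "(1 / (1 - 1/2) + 6 * (\<gamma> k)\<^sup>2 / (1/2 * u_f\<^sup>2 * (real J)\<^sup>2)) \<le> 3" by simp
    hence i1: "(1 / (1 - 1/2) + 6 * (\<gamma> k)\<^sup>2 / (1/2 * u_f\<^sup>2 * (real J)\<^sup>2)) * D \<le> 3 * D"
      using D0 by (intro mult_right_mono) auto
    have i2: "3 * (\<gamma> k)\<^sup>2 * \<delta>2 * (real H) ^ 3 / (1/2 * (real J)\<^sup>2) = 6 * (\<gamma> k)\<^sup>2 * \<delta>2 * (real H) ^ 3 / (real J)\<^sup>2"
      by simp
    have "cons_dev H (\<lambda>i. lamh i k) \<le> 3 * D + 6 * (\<gamma> k)\<^sup>2 * \<delta>2 * (real H) ^ 3 / (real J)\<^sup>2"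
      using order_trans[OF p add_mono[OF i1 eq_refl[OF i2]]] .
    thus ?thesis unfolding D_def x_def .
  qed
  show ?thesis using part1 part2 by blast
qed

end
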